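(* Let $d\ge 2$ and let $X_1,\ldots,X_d$ be random variables with joint density $p_{1\cdots d}$ and marginal densities $p_1,\ldots,p_d$ (all entropies and divergences below assumed finite). For a subset $b\subseteq[d]$ let $p_b$ be the joint (marginal) density of $(X_i)_{i\in b}$, and for a partition $\pi=b_1|\cdots|b_r$ of $[d]$ let $p_\pi=\prod_{j=1}^r p_{b_j}$ and $|\pi|=r$. Let $D_{\mathrm{KL}}(p\|q)=\int p\log(p/q)\,\mathrm{d}x$. Define $$\mathrm{II}(d)=-\sum_{T\subseteq\{X_1,\ldots,X_d\}}(-1)^{d-|T|}\,H(T),$$ where $H(T)$ is the (joint) entropy of the variables in $T$ (with $H(\emptyset)=0$), $$\mathrm{LI}(d)=\sum_{\pi_l}(-1)^{|\pi_l|-1}D_{\mathrm{KL}}\Big(p_{\pi_l}\,\Big\|\,\prod_{i=1}^d p_i\Big),$$ where the sum runs over all partitions $\pi_l$ of $[d]$ having at most one block of size at least two, and $$\mathrm{SI}(d)=\sum_{\pi}(|\pi|-1)!\,(-1)^{|\pi|-1}D_{\mathrm{KL}}\Big(p_{\pi}\,\Big\|\,\prod_{i=1}^d p_i\Big),$$ where the sum runs over all partitions $\pi$ of $[d]$. Then $$\mathrm{II}(d)=\mathrm{LI}(d)=\mathrm{SI}(d).$$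
   Context: $\mathrm{II}$ is the interaction information, $\mathrm{LI}$ the Lancaster information and $\mathrm{SI}$ the Streitberg information (here with the Kullback–Leibler divergence as the divergence). A partition of $[d]$ is a collection of non-empty pairwise disjoint blocks covering $[d]$. *)

theory Defs
  imports "HOL-Analysis.Analysis" "HOL-Library.Disjoint_Sets"
begin

text \<open>Real-valued random variables X_i, i in the index set I = {..<d}; a point of the
  sample space is x :: nat => real (extensional on I), with reference measure the product
  Lebesgue measure.\<close>

abbreviation Leb :: "nat set \<Rightarrow> (nat \<Rightarrow> real) measure" where
  "Leb b \<equiv> PiM b (\<lambda>_. lborel)"

definition marg :: "nat set \<Rightarrow> ((nat \<Rightarrow> real) \<Rightarrow> real) \<Rightarrow> nat set \<Rightarrow> (nat \<Rightarrow> real) \<Rightarrow> real" where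
  "marg I p b y = (\<integral>z. p (merge b (I - b) (y, z)) \<partial>Leb (I - b))"

definition ent :: "nat set \<Rightarrow> ((nat \<Rightarrow> real) \<Rightarrow> real) \<Rightarrow> nat set \<Rightarrow> real" where
  "ent I p b = - (\<integral>y. marg I p b y * ln (marg I p b y) \<partial>Leb b)"

definition part_dens :: "nat set \<Rightarrow> ((nat \<Rightarrow> real) \<Rightarrow> real) \<Rightarrow> nat set set \<Rightarrow> (nat \<Rightarrow> real) \<Rightarrow> real" where
  "part_dens I p P x = (\<Prod>B\<in>P. marg I p B (restrict x B))"

definition indep_dens :: "nat set \<Rightarrow> ((nat \<Rightarrow> real) \<Rightarrow> real) \<Rightarrow> (nat \<Rightarrow> real) \<Rightarrow> real" where
  "indep_dens I p x = (\<Prod>i\<in>I. marg I p {i} (restrict x {i}))"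

definition KL_part :: "nat set \<Rightarrow> ((nat \<Rightarrow> real) \<Rightarrow> real) \<Rightarrow> nat set set \<Rightarrow> real" where
  "KL_part I p P = (\<integral>x. part_dens I p P x * ln (part_dens I p P x / indep_dens I p x) \<partial>Leb I)"

definition II :: "nat \<Rightarrow> ((nat \<Rightarrow> real) \<Rightarrow> real) \<Rightarrow> real" where
  "II d p = - (\<Sum>T\<in>Pow {..<d}. (-1) ^ (d - card T) * ent {..<d} p T)"

definition LI :: "nat \<Rightarrow> ((nat \<Rightarrow> real) \<Rightarrow> real) \<Rightarrow> real" where
  "LI d p = (\<Sum>P\<in>{P. partition_on {..<d} P \<and> card {B\<in>P. 2 \<le> card B} \<le> 1}.
              (-1) ^ (card P - 1) * KL_part {..<d} p P)"

definition SI :: "nat \<Rightarrow> ((nat \<Rightarrow> real) \<Rightarrow> real) \<Rightarrow> real" where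
  "SI d p = (\<Sum>P\<in>{P. partition_on {..<d} P}.
              fact (card P - 1) * (-1) ^ (card P - 1) * KL_part {..<d} p P)"

end

theory Submission
  imports Defs
begin

lemma PSF: "product_sigma_finite (\<lambda>_::nat. lborel)"
  by (simp add: product_sigma_finite_def lborel.sigma_finite_measure_axioms)

lemma SFM: "finite J \<Longrightarrow> sigma_finite_measure (Leb J)"
proof -
  assume "finite J"
  then interpret finite_product_sigma_finite "\<lambda>_::nat. lborel" J
    by (simp add: finite_product_sigma_finite_def finite_product_sigma_finite_axioms_def PSF)
  show ?thesis ..
qed

lemma nn_fold:
  assumes "I \<inter> J = {}" "finite I" "finite J" "f \<in> borel_measurable (Leb (I \<union> J))"
  shows "integral\<^sup>N (Leb (I \<union> J)) f = (\<integral>\<^sup>+ x. (\<integral>\<^sup>+ y. f (merge I J (x, y)) \<partial>Leb J) \<partial>Leb I)"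
  by (rule product_sigma_finite.product_nn_integral_fold[OF PSF assms])

lemma marg_meas:
  assumes "B \<subseteq> I" "finite I" "p \<in> borel_measurable (Leb I)"
  shows "marg I p B \<in> borel_measurable (Leb B)"
proof -
  interpret S: sigma_finite_measure "Leb (I - B)" using SFM assms by auto
  have U: "B \<union> (I - B) = I" using assms by auto
  have "(\<lambda>(y,z). p (merge B (I - B) (y, z))) \<in> borel_measurable (Leb B \<Otimes>\<^sub>M Leb (I - B))"
    using measurable_comp[OF measurable_merge[of B "I - B" "\<lambda>_. lborel"], of p borel] assms U
    by (simp add: comp_def case_prod_beta')
  then show ?thesis unfolding marg_def
    by (intro S.borel_measurable_lebesgue_integral) (simp add: case_prod_beta')
qed

lemma marg_nonneg:
  assumes "\<And>x. x \<in> space (Leb I) \<Longrightarrow> 0 \<le> p x" "B \<subseteq> I"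
  shows "0 \<le> marg I p B y"
proof -
  have "merge B (I - B) (y, z) \<in> space (Leb I)" for z
    using assms(2) extensional_merge[of B "I - B" y z] by (simp add: space_PiM PiE_def Un_absorb1)
  then have "0 \<le> p (merge B (I - B) (y, z))" for z using assms(1) by blast
  then show ?thesis unfolding marg_def by (intro integral_nonneg_AE) simp
qed

lemma transfer_int:
  fixes a :: "'a \<Rightarrow> real" and b :: "'b \<Rightarrow> real" and \<phi> :: "'b \<Rightarrow> real"
  assumes T: "T \<in> measurable M N" and a: "a \<in> borel_measurable M" and b: "b \<in> borel_measurable N"
    and a0: "\<And>x. x \<in> space M \<Longrightarrow> 0 \<le> a x" and b0: "\<And>y. 0 \<le> b y"
    and eq: "\<And>h. h \<in> borel_measurable N \<Longrightarrow> (\<And>y. 0 \<le> h y) \<Longrightarrow>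
        (\<integral>\<^sup>+x. ennreal (a x * h (T x)) \<partial>M) = (\<integral>\<^sup>+y. ennreal (b y * h y) \<partial>N)"
    and phi: "\<phi> \<in> borel_measurable N"
  shows "(integrable M (\<lambda>x. a x * \<phi> (T x)) \<longleftrightarrow> integrable N (\<lambda>y. b y * \<phi> y))
    \<and> (\<integral>x. a x * \<phi> (T x) \<partial>M) = (\<integral>y. b y * \<phi> y \<partial>N)"
proof -
  have pos: "(\<integral>\<^sup>+x. ennreal (a x * \<phi> (T x)) \<partial>M) = (\<integral>\<^sup>+y. ennreal (b y * \<phi> y) \<partial>N)"
  proof -
    have "(\<integral>\<^sup>+x. ennreal (a x * \<phi> (T x)) \<partial>M) = (\<integral>\<^sup>+x. ennreal (a x * max 0 (\<phi> (T x))) \<partial>M)"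
      using a0 by (intro nn_integral_cong) (auto simp: max_def ennreal_neg mult_nonneg_nonpos)
    also have "\<dots> = (\<integral>\<^sup>+y. ennreal (b y * max 0 (\<phi> y)) \<partial>N)"
      using phi by (intro eq) auto
    also have "\<dots> = (\<integral>\<^sup>+y. ennreal (b y * \<phi> y) \<partial>N)"
      using b0 by (intro nn_integral_cong) (auto simp: max_def ennreal_neg mult_nonneg_nonpos)
    finally show ?thesis .
  qed
  have neg: "(\<integral>\<^sup>+x. ennreal (- (a x * \<phi> (T x))) \<partial>M) = (\<integral>\<^sup>+y. ennreal (- (b y * \<phi> y)) \<partial>N)"
  proof -
    have "(\<integral>\<^sup>+x. ennreal (- (a x * \<phi> (T x))) \<partial>M) = (\<integral>\<^sup>+x. ennreal (a x * max 0 (- \<phi> (T x))) \<partial>M)"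
      using a0 by (intro nn_integral_cong) (auto simp: max_def ennreal_neg mult_nonneg_nonpos)
    also have "\<dots> = (\<integral>\<^sup>+y. ennreal (b y * max 0 (- \<phi> y)) \<partial>N)"
      using phi by (intro eq) auto
    also have "\<dots> = (\<integral>\<^sup>+y. ennreal (- (b y * \<phi> y)) \<partial>N)"
      using b0 by (intro nn_integral_cong) (auto simp: max_def ennreal_neg mult_nonneg_nonpos)
    finally show ?thesis .
  qed
  have m1: "(\<lambda>x. a x * \<phi> (T x)) \<in> borel_measurable M"
    using a phi T by measurable
  have m2: "(\<lambda>y. b y * \<phi> y) \<in> borel_measurable N"
    using b phi by measurable
  have iff: "integrable M (\<lambda>x. a x * \<phi> (T x)) \<longleftrightarrow> integrable N (\<lambda>y. b y * \<phi> y)"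
    unfolding real_integrable_def using m1 m2 pos neg by simp
  show ?thesis
  proof (cases "integrable N (\<lambda>y. b y * \<phi> y)")
    case True
    then have "integrable M (\<lambda>x. a x * \<phi> (T x))" using iff by simp
    then show ?thesis using True iff
      by (simp add: real_lebesgue_integral_def pos neg)
  next
    case False
    then show ?thesis using iff by (simp add: not_integrable_integral_eq)
  qed
qed

lemma space_Leb_merge: "B \<subseteq> I \<Longrightarrow> merge B (I - B) (y, z) \<in> space (Leb I)"
  using extensional_merge[of B "I - B" y z] by (simp add: space_PiM PiE_def Un_absorb1)

lemma restrict_in_space: "y \<in> space (Leb B) \<Longrightarrow> restrict y B = y"
  by (simp add: space_PiM PiE_def extensional_restrict)

lemma marg_AE:
  assumes I: "finite I" "B \<subseteq> I" and meas: "p \<in> borel_measurable (Leb I)"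
    and nonneg: "\<And>x. x \<in> space (Leb I) \<Longrightarrow> 0 \<le> p x" and integ: "integrable (Leb I) p"
  shows "AE y in Leb B. (\<integral>\<^sup>+z. ennreal (p (merge B (I - B) (y, z))) \<partial>Leb (I - B)) = ennreal (marg I p B y)"
proof -
  interpret S: sigma_finite_measure "Leb (I - B)" using SFM I by auto
  have U: "B \<union> (I - B) = I" using I by auto
  have D: "B \<inter> (I - B) = {}" by auto
  have pm: "(\<lambda>(y,z). p (merge B (I - B) (y, z))) \<in> borel_measurable (Leb B \<Otimes>\<^sub>M Leb (I - B))"
    using measurable_comp[OF measurable_merge[of B "I - B" "\<lambda>_. lborel"], of p borel] meas U
    by (simp add: comp_def case_prod_beta')
  have Fm: "(\<lambda>y. \<integral>\<^sup>+z. ennreal (p (merge B (I - B) (y, z))) \<partial>Leb (I - B)) \<in> borel_measurable (Leb B)"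
    using pm by (intro S.borel_measurable_nn_integral) (simp add: case_prod_beta')
  have "(\<integral>\<^sup>+y. (\<integral>\<^sup>+z. ennreal (p (merge B (I - B) (y, z))) \<partial>Leb (I - B)) \<partial>Leb B)
      = (\<integral>\<^sup>+x. ennreal (p x) \<partial>Leb (B \<union> (I - B)))"
    using nn_fold[OF D finite_subset[OF I(2) I(1)], of "\<lambda>x. ennreal (p x)"] I meas U by simp
  also have "\<dots> = ennreal (integral\<^sup>L (Leb I) p)"
    using U nonneg integ by (simp add: nn_integral_eq_integral)
  finally have fin: "(\<integral>\<^sup>+y. (\<integral>\<^sup>+z. ennreal (p (merge B (I - B) (y, z))) \<partial>Leb (I - B)) \<partial>Leb B) \<noteq> \<infinity>"
    by simp
  show ?thesis
    using nn_integral_PInf_AE[OF Fm fin]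
  proof (rule AE_mp, intro AE_I2 impI)
    fix y assume y: "y \<in> space (Leb B)"
      and ne: "(\<integral>\<^sup>+z. ennreal (p (merge B (I - B) (y, z))) \<partial>Leb (I - B)) \<noteq> \<infinity>"
    have zm: "(\<lambda>z. p (merge B (I - B) (y, z))) \<in> borel_measurable (Leb (I - B))"
      using measurable_Pair2[OF pm y] by simp
    have zn: "0 \<le> p (merge B (I - B) (y, z))" for z
      using nonneg space_Leb_merge[OF I(2)] by blast
    have "integrable (Leb (I - B)) (\<lambda>z. p (merge B (I - B) (y, z)))"
      using zm zn ne by (intro integrableI_nonneg) (auto simp: less_top)
    then show "(\<integral>\<^sup>+z. ennreal (p (merge B (I - B) (y, z))) \<partial>Leb (I - B)) = ennreal (marg I p B y)"
      unfolding marg_def using zn by (simp add: nn_integral_eq_integral)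
  qed
qed

lemma marg_nn_transfer:
  assumes I: "finite I" "B \<subseteq> I" and meas: "p \<in> borel_measurable (Leb I)"
    and nonneg: "\<And>x. x \<in> space (Leb I) \<Longrightarrow> 0 \<le> p x" and integ: "integrable (Leb I) p"
    and h: "h \<in> borel_measurable (Leb B)" "\<And>y. 0 \<le> h y"
  shows "(\<integral>\<^sup>+x. ennreal (p x * h (restrict x B)) \<partial>Leb I) = (\<integral>\<^sup>+y. ennreal (marg I p B y * h y) \<partial>Leb B)"
proof -
  have U: "B \<union> (I - B) = I" using I by auto
  have D: "B \<inter> (I - B) = {}" by auto
  have hm: "(\<lambda>x. ennreal (p x * h (restrict x B))) \<in> borel_measurable (Leb (B \<union> (I - B)))"
  proof -
    have r: "(\<lambda>x. h (restrict x B)) \<in> borel_measurable (Leb I)"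
      by (rule measurable_compose[OF measurable_restrict_subset[OF I(2)] h(1)])
    have "(\<lambda>x. ennreal (p x * h (restrict x B))) \<in> borel_measurable (Leb I)"
      using meas r by measurable
    then show ?thesis using U by simp
  qed
  have "(\<integral>\<^sup>+x. ennreal (p x * h (restrict x B)) \<partial>Leb I)
     = (\<integral>\<^sup>+x. ennreal (p x * h (restrict x B)) \<partial>Leb (B \<union> (I - B)))" using U by simp
  also have "\<dots> = (\<integral>\<^sup>+y. (\<integral>\<^sup>+z. ennreal (p (merge B (I - B) (y, z)) * h (restrict (merge B (I - B) (y, z)) B)) \<partial>Leb (I - B)) \<partial>Leb B)"
    using nn_fold[OF D finite_subset[OF I(2) I(1)] _ hm] I by simp
  also have "\<dots> = (\<integral>\<^sup>+y. ennreal (h y) * (\<integral>\<^sup>+z. ennreal (p (merge B (I - B) (y, z))) \<partial>Leb (I - B)) \<partial>Leb B)"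
  proof (intro nn_integral_cong)
    fix y assume y: "y \<in> space (Leb B)"
    have "(\<integral>\<^sup>+z. ennreal (p (merge B (I - B) (y, z)) * h (restrict (merge B (I - B) (y, z)) B)) \<partial>Leb (I - B))
       = (\<integral>\<^sup>+z. ennreal (h y) * ennreal (p (merge B (I - B) (y, z))) \<partial>Leb (I - B))"
      using y D nonneg space_Leb_merge[OF I(2)] h(2)
      by (intro nn_integral_cong) (simp add: restrict_in_space ennreal_mult mult.commute)
    also have "\<dots> = ennreal (h y) * (\<integral>\<^sup>+z. ennreal (p (merge B (I - B) (y, z))) \<partial>Leb (I - B))"
    proof (rule nn_integral_cmult)
      interpret S: sigma_finite_measure "Leb (I - B)" using SFM I by auto
      have pm: "(\<lambda>(y,z). p (merge B (I - B) (y, z))) \<in> borel_measurable (Leb B \<Otimes>\<^sub>M Leb (I - B))"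
        using measurable_comp[OF measurable_merge[of B "I - B" "\<lambda>_. lborel"], of p borel] meas U
        by (simp add: comp_def case_prod_beta')
      show "(\<lambda>z. ennreal (p (merge B (I - B) (y, z)))) \<in> borel_measurable (Leb (I - B))"
        using measurable_Pair2[OF pm y] by simp
    qed
    finally show "(\<integral>\<^sup>+z. ennreal (p (merge B (I - B) (y, z)) * h (restrict (merge B (I - B) (y, z)) B)) \<partial>Leb (I - B))
       = ennreal (h y) * (\<integral>\<^sup>+z. ennreal (p (merge B (I - B) (y, z))) \<partial>Leb (I - B))" .
  qed
  also have "\<dots> = (\<integral>\<^sup>+y. ennreal (marg I p B y * h y) \<partial>Leb B)"
  proof (rule nn_integral_cong_AE)
    have ae: "AE y in Leb B. (\<integral>\<^sup>+z. ennreal (p (merge B (I - B) (y, z))) \<partial>Leb (I - B)) = ennreal (marg I p B y)"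
      by (rule marg_AE[OF I meas]) (use nonneg integ in auto)
    have mn: "0 \<le> marg I p B y" for y by (rule marg_nonneg) (use nonneg I in auto)
    show "AE y in Leb B. ennreal (h y) * (\<integral>\<^sup>+z. ennreal (p (merge B (I - B) (y, z))) \<partial>Leb (I - B)) = ennreal (marg I p B y * h y)"
      using ae by (rule AE_mp) (intro AE_I2 impI, simp add: ennreal_mult h(2) mn mult.commute)
  qed
  finally show ?thesis .
qed

lemma restrict_merge_sub: "C \<subseteq> J \<Longrightarrow> C \<inter> I' = {} \<Longrightarrow> restrict (merge I' J (y,z)) C = restrict z C"
  by (auto simp: restrict_def merge_def fun_eq_iff)

lemma G_meas:
  fixes g :: "nat set \<Rightarrow> (nat \<Rightarrow> real) \<Rightarrow> real"
  assumes "\<And>C. C \<in> P \<Longrightarrow> C \<subseteq> J" "\<And>C. C \<in> P \<Longrightarrow> g C \<in> borel_measurable (Leb C)"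
  shows "(\<lambda>x. \<Prod>C\<in>P. g C (restrict x C)) \<in> borel_measurable (Leb J)"
proof (rule borel_measurable_prod[of P "\<lambda>C x. g C (restrict x C)", simplified])
  fix C assume "C \<in> P"
  then show "(\<lambda>x. g C (restrict x C)) \<in> borel_measurable (Leb J)"
    using assms by (intro measurable_compose[OF measurable_restrict_subset]) auto
qed

lemma block_step:
  assumes fin: "finite P'" "finite C0" "\<And>C. C \<in> P' \<Longrightarrow> finite C"
    and disj: "C0 \<inter> \<Union>P' = {}"
    and g: "\<And>C. C \<in> insert C0 P' \<Longrightarrow> g C \<in> borel_measurable (Leb C)" "\<And>C y. C \<in> insert C0 P' \<Longrightarrow> 0 \<le> g C y"
    and one: "(\<integral>\<^sup>+z. ennreal (\<Prod>C\<in>P'. g C (restrict z C)) \<partial>Leb (\<Union>P')) = 1"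
    and nd: "C0 \<notin> P'"
    and h: "h \<in> borel_measurable (Leb C0)" "\<And>y. 0 \<le> h y"
  shows "(\<integral>\<^sup>+x. ennreal ((\<Prod>C\<in>insert C0 P'. g C (restrict x C)) * h (restrict x C0)) \<partial>Leb (C0 \<union> \<Union>P'))
     = (\<integral>\<^sup>+y. ennreal (g C0 y * h y) \<partial>Leb C0)"
proof -
  let ?R = "\<Union>P'"
  have finR: "finite ?R" using fin by auto
  have m1: "(\<lambda>x. \<Prod>C\<in>insert C0 P'. g C (restrict x C)) \<in> borel_measurable (Leb (C0 \<union> ?R))"
    by (rule G_meas) (use g in auto)
  have m2: "(\<lambda>x. h (restrict x C0)) \<in> borel_measurable (Leb (C0 \<union> ?R))"
    by (rule measurable_compose[OF measurable_restrict_subset h(1)]) auto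
  have m3: "(\<lambda>x. \<Prod>C\<in>P'. g C (restrict x C)) \<in> borel_measurable (Leb ?R)"
    by (rule G_meas) (use g in auto)
  have "(\<integral>\<^sup>+x. ennreal ((\<Prod>C\<in>insert C0 P'. g C (restrict x C)) * h (restrict x C0)) \<partial>Leb (C0 \<union> ?R))
     = (\<integral>\<^sup>+y. (\<integral>\<^sup>+z. ennreal ((\<Prod>C\<in>insert C0 P'. g C (restrict (merge C0 ?R (y,z)) C)) * h (restrict (merge C0 ?R (y,z)) C0)) \<partial>Leb ?R) \<partial>Leb C0)"
    by (intro nn_fold[OF disj fin(2) finR] measurable_compose[OF _ measurable_ennreal] borel_measurable_times m1 m2)
  also have "\<dots> = (\<integral>\<^sup>+y. ennreal (g C0 y * h y) * (\<integral>\<^sup>+z. ennreal (\<Prod>C\<in>P'. g C (restrict z C)) \<partial>Leb ?R) \<partial>Leb C0)"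
  proof (intro nn_integral_cong)
    fix y assume y: "y \<in> space (Leb C0)"
    have "(\<integral>\<^sup>+z. ennreal ((\<Prod>C\<in>insert C0 P'. g C (restrict (merge C0 ?R (y,z)) C)) * h (restrict (merge C0 ?R (y,z)) C0)) \<partial>Leb ?R)
        = (\<integral>\<^sup>+z. ennreal (g C0 y * h y) * ennreal (\<Prod>C\<in>P'. g C (restrict z C)) \<partial>Leb ?R)"
    proof (intro nn_integral_cong)
      fix z
      have "(\<Prod>C\<in>P'. g C (restrict (merge C0 ?R (y,z)) C)) = (\<Prod>C\<in>P'. g C (restrict z C))"
      proof (rule prod.cong)
        fix C assume "C \<in> P'"
        then have "restrict (merge C0 ?R (y,z)) C = restrict z C"
          using disj by (intro restrict_merge_sub) auto
        then show "g C (restrict (merge C0 ?R (y,z)) C) = g C (restrict z C)" by simp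
      qed simp
      moreover have "restrict (merge C0 ?R (y,z)) C0 = y"
        using disj y by (simp add: restrict_in_space)
      ultimately show "ennreal ((\<Prod>C\<in>insert C0 P'. g C (restrict (merge C0 ?R (y,z)) C)) * h (restrict (merge C0 ?R (y,z)) C0))
        = ennreal (g C0 y * h y) * ennreal (\<Prod>C\<in>P'. g C (restrict z C))"
        using fin(1) nd g(2) h(2)
        by (simp add: ennreal_mult[symmetric] prod_nonneg mult_ac)
    qed
    also have "\<dots> = ennreal (g C0 y * h y) * (\<integral>\<^sup>+z. ennreal (\<Prod>C\<in>P'. g C (restrict z C)) \<partial>Leb ?R)"
      by (intro nn_integral_cmult measurable_compose[OF m3 measurable_ennreal])
    finally show "(\<integral>\<^sup>+z. ennreal ((\<Prod>C\<in>insert C0 P'. g C (restrict (merge C0 ?R (y,z)) C)) * h (restrict (merge C0 ?R (y,z)) C0)) \<partial>Leb ?R)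
        = ennreal (g C0 y * h y) * (\<integral>\<^sup>+z. ennreal (\<Prod>C\<in>P'. g C (restrict z C)) \<partial>Leb ?R)" .
  qed
  also have "\<dots> = (\<integral>\<^sup>+y. ennreal (g C0 y * h y) \<partial>Leb C0)"
    using one by simp
  finally show ?thesis .
qed

lemma block_one:
  assumes "finite P" "\<And>C. C \<in> P \<Longrightarrow> finite C" "disjoint P"
    "\<And>C. C \<in> P \<Longrightarrow> g C \<in> borel_measurable (Leb C)" "\<And>C y. C \<in> P \<Longrightarrow> 0 \<le> g C y"
    "\<And>C. C \<in> P \<Longrightarrow> (\<integral>\<^sup>+y. ennreal (g C y) \<partial>Leb C) = 1"
  shows "(\<integral>\<^sup>+x. ennreal (\<Prod>C\<in>P. g C (restrict x C)) \<partial>Leb (\<Union>P)) = 1"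
  using assms
proof (induction P rule: finite_induct)
  case empty
  then show ?case by (simp add: PiM_empty)
next
  case (insert C0 P')
  have d: "disjoint P'" using insert.prems(2) by (simp add: pairwise_insert)
  have dj: "C0 \<inter> \<Union>P' = {}"
    using insert.prems(2) insert.hyps(2) by (auto simp: pairwise_def disjnt_def)
  have one: "(\<integral>\<^sup>+z. ennreal (\<Prod>C\<in>P'. g C (restrict z C)) \<partial>Leb (\<Union>P')) = 1"
    by (rule insert.IH) (use insert.prems d in auto)
  have "(\<integral>\<^sup>+x. ennreal ((\<Prod>C\<in>insert C0 P'. g C (restrict x C)) * (\<lambda>_. 1) (restrict x C0)) \<partial>Leb (C0 \<union> \<Union>P'))
     = (\<integral>\<^sup>+y. ennreal (g C0 y * (\<lambda>_. 1) y) \<partial>Leb C0)"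
    by (rule block_step[OF insert.hyps(1) _ _ dj _ _ one insert.hyps(2)]) (use insert.prems in auto)
  then have "(\<integral>\<^sup>+x. ennreal (\<Prod>C\<in>insert C0 P'. g C (restrict x C)) \<partial>Leb (C0 \<union> \<Union>P')) = (\<integral>\<^sup>+y. ennreal (g C0 y) \<partial>Leb C0)"
    by (simp only: mult_1_right)
  moreover have "(\<integral>\<^sup>+y. ennreal (g C0 y) \<partial>Leb C0) = 1" using insert.prems by simp
  ultimately show ?case by (simp only: Union_insert)
qed

lemma block_main:
  assumes "finite P" "\<And>C. C \<in> P \<Longrightarrow> finite C" "disjoint P"
    "\<And>C. C \<in> P \<Longrightarrow> g C \<in> borel_measurable (Leb C)" "\<And>C y. C \<in> P \<Longrightarrow> 0 \<le> g C y"
    "\<And>C. C \<in> P \<Longrightarrow> (\<integral>\<^sup>+y. ennreal (g C y) \<partial>Leb C) = 1"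
    and C0: "C0 \<in> P" and h: "h \<in> borel_measurable (Leb C0)" "\<And>y. 0 \<le> h y"
  shows "(\<integral>\<^sup>+x. ennreal ((\<Prod>C\<in>P. g C (restrict x C)) * h (restrict x C0)) \<partial>Leb (\<Union>P))
     = (\<integral>\<^sup>+y. ennreal (g C0 y * h y) \<partial>Leb C0)"
proof -
  have d: "disjoint (P - {C0})" using assms(3) by (simp add: pairwise_def)
  have dj: "C0 \<inter> \<Union>(P - {C0}) = {}"
    using assms(3) C0 by (auto simp: pairwise_def disjnt_def)
  have one: "(\<integral>\<^sup>+z. ennreal (\<Prod>C\<in>P - {C0}. g C (restrict z C)) \<partial>Leb (\<Union>(P - {C0}))) = 1"
    by (rule block_one) (use assms d in auto)
  have P: "P = insert C0 (P - {C0})" using C0 by auto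
  have U: "\<Union>P = C0 \<union> \<Union>(P - {C0})" using C0 by auto
  have "(\<integral>\<^sup>+x. ennreal ((\<Prod>C\<in>insert C0 (P - {C0}). g C (restrict x C)) * h (restrict x C0)) \<partial>Leb (C0 \<union> \<Union>(P - {C0})))
     = (\<integral>\<^sup>+y. ennreal (g C0 y * h y) \<partial>Leb C0)"
    by (rule block_step[OF _ _ _ dj _ _ one _ h]) (use assms in auto)
  then show ?thesis using P U by simp
qed

lemma restrict_restrict_sub: "i \<in> C \<Longrightarrow> restrict (restrict x C) {i} = restrict x {i}"
  by (auto simp: restrict_def fun_eq_iff)

context
  fixes I :: "nat set" and p :: "(nat \<Rightarrow> real) \<Rightarrow> real"
  assumes finI: "finite I"
    and meas: "p \<in> borel_measurable (Leb I)"
    and nonneg: "\<And>x. x \<in> space (Leb I) \<Longrightarrow> 0 \<le> p x"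
    and integ: "integrable (Leb I) p"
    and total: "(\<integral>x. p x \<partial>Leb I) = 1"
begin

lemma gm: "C \<subseteq> I \<Longrightarrow> marg I p C \<in> borel_measurable (Leb C)"
  using marg_meas finI meas by blast

lemma gr: "C \<subseteq> I \<Longrightarrow> (\<lambda>x. marg I p C (restrict x C)) \<in> borel_measurable (Leb I)"
  by (rule measurable_compose[OF measurable_restrict_subset gm])

lemma g0: "C \<subseteq> I \<Longrightarrow> 0 \<le> marg I p C y"
  by (rule marg_nonneg) (use nonneg in auto)

lemma MLnn: "B \<subseteq> I \<Longrightarrow> h \<in> borel_measurable (Leb B) \<Longrightarrow> (\<And>y. 0 \<le> h y) \<Longrightarrow>
  (\<integral>\<^sup>+x. ennreal (p x * h (restrict x B)) \<partial>Leb I) = (\<integral>\<^sup>+y. ennreal (marg I p B y * h y) \<partial>Leb B)"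
  by (rule marg_nn_transfer[OF finI _ meas _ integ]) (use nonneg in auto)

lemma gone: "C \<subseteq> I \<Longrightarrow> (\<integral>\<^sup>+y. ennreal (marg I p C y) \<partial>Leb C) = 1"
proof -
  assume C: "C \<subseteq> I"
  have "(\<integral>\<^sup>+x. ennreal (p x * (\<lambda>_. 1) (restrict x C)) \<partial>Leb I) = (\<integral>\<^sup>+y. ennreal (marg I p C y * (\<lambda>_. 1) y) \<partial>Leb C)"
    by (rule MLnn[OF C]) auto
  moreover have "(\<integral>\<^sup>+x. ennreal (p x) \<partial>Leb I) = 1"
    using nn_integral_eq_integral[OF integ] nonneg total by simp
  ultimately show ?thesis by simp
qed

lemma MLr:
  assumes B: "B \<subseteq> I" and phi: "\<phi> \<in> borel_measurable (Leb B)"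
  shows "(integrable (Leb I) (\<lambda>x. p x * \<phi> (restrict x B)) \<longleftrightarrow> integrable (Leb B) (\<lambda>y. marg I p B y * \<phi> y))
    \<and> (\<integral>x. p x * \<phi> (restrict x B) \<partial>Leb I) = (\<integral>y. marg I p B y * \<phi> y \<partial>Leb B)"
  by (rule transfer_int[OF measurable_restrict_subset[OF B] meas gm[OF B] nonneg g0[OF B] MLnn[OF B] phi])


lemma pf:
  assumes "partition_on I P"
  shows "finite P" "\<And>C. C \<in> P \<Longrightarrow> C \<subseteq> I" "\<And>C. C \<in> P \<Longrightarrow> finite C" "disjoint P" "\<Union>P = I"
  using assms finI finite_elements[OF finI assms] by (auto simp: partition_on_def intro: finite_subset)

lemma Gm: "partition_on I P \<Longrightarrow> part_dens I p P \<in> borel_measurable (Leb I)"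
  unfolding part_dens_def[abs_def] by (rule G_meas) (use pf gm in auto)

lemma G0: "partition_on I P \<Longrightarrow> 0 \<le> part_dens I p P x"
  unfolding part_dens_def using pf(2) g0 by (metis prod_nonneg)

lemma BLnn:
  assumes P: "partition_on I P" and C0: "C0 \<in> P" and h: "h \<in> borel_measurable (Leb C0)" "\<And>y. 0 \<le> h y"
  shows "(\<integral>\<^sup>+x. ennreal (part_dens I p P x * h (restrict x C0)) \<partial>Leb I) = (\<integral>\<^sup>+y. ennreal (marg I p C0 y * h y) \<partial>Leb C0)"
proof -
  have "(\<integral>\<^sup>+x. ennreal ((\<Prod>C\<in>P. marg I p C (restrict x C)) * h (restrict x C0)) \<partial>Leb (\<Union>P)) = (\<integral>\<^sup>+y. ennreal (marg I p C0 y * h y) \<partial>Leb C0)"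
    by (rule block_main[OF pf(1)[OF P] pf(3)[OF P] pf(4)[OF P] _ _ _ C0 h])
       (use pf(2)[OF P] gm g0 gone in auto)
  then show ?thesis unfolding part_dens_def pf(5)[OF P] .
qed

lemma BLr:
  assumes P: "partition_on I P" and C0: "C0 \<in> P" and phi: "\<phi> \<in> borel_measurable (Leb C0)"
  shows "(integrable (Leb I) (\<lambda>x. part_dens I p P x * \<phi> (restrict x C0)) \<longleftrightarrow> integrable (Leb C0) (\<lambda>y. marg I p C0 y * \<phi> y))
    \<and> (\<integral>x. part_dens I p P x * \<phi> (restrict x C0) \<partial>Leb I) = (\<integral>y. marg I p C0 y * \<phi> y \<partial>Leb C0)"
proof -
  have C0I: "C0 \<subseteq> I" using pf(2)[OF P C0] .
  show ?thesis
    by (rule transfer_int[OF measurable_restrict_subset[OF C0I] Gm[OF P] gm[OF C0I] G0[OF P] g0[OF C0I] BLnn[OF P C0] phi])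
qed

lemma null:
  assumes P: "partition_on I P" and i: "i \<in> I"
  shows "AE x in Leb I. 0 < part_dens I p P x \<longrightarrow> 0 < marg I p {i} (restrict x {i})"
proof -
  obtain C where C: "C \<in> P" "i \<in> C" using pf(5)[OF P] i by auto
  have CI: "C \<subseteq> I" using pf(2)[OF P C(1)] .
  have iI: "{i} \<subseteq> I" using i by auto
  define \<psi> :: "(nat \<Rightarrow> real) \<Rightarrow> real" where "\<psi> w = (if marg I p {i} w = 0 then 1 else 0)" for w
  have \<psi>m: "\<psi> \<in> borel_measurable (Leb {i})"
    unfolding \<psi>_def using gm[OF iI] by measurable
  have hm: "(\<lambda>y. \<psi> (restrict y {i})) \<in> borel_measurable (Leb C)"
    using C(2) by (intro measurable_compose[OF measurable_restrict_subset \<psi>m]) auto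
  have "(\<integral>\<^sup>+x. ennreal (part_dens I p P x * \<psi> (restrict x {i})) \<partial>Leb I)
      = (\<integral>\<^sup>+x. ennreal (part_dens I p P x * (\<lambda>y. \<psi> (restrict y {i})) (restrict x C)) \<partial>Leb I)"
    using C(2) by (simp add: restrict_restrict_sub)
  also have "\<dots> = (\<integral>\<^sup>+y. ennreal (marg I p C y * \<psi> (restrict y {i})) \<partial>Leb C)"
    by (rule BLnn[OF P C(1) hm]) (simp add: \<psi>_def)
  also have "\<dots> = (\<integral>\<^sup>+x. ennreal (p x * (\<lambda>y. \<psi> (restrict y {i})) (restrict x C)) \<partial>Leb I)"
    by (rule MLnn[OF CI hm, symmetric]) (simp add: \<psi>_def)
  also have "\<dots> = (\<integral>\<^sup>+x. ennreal (p x * \<psi> (restrict x {i})) \<partial>Leb I)"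
    using C(2) by (simp add: restrict_restrict_sub)
  also have "\<dots> = (\<integral>\<^sup>+y. ennreal (marg I p {i} y * \<psi> y) \<partial>Leb {i})"
    by (rule MLnn[OF iI \<psi>m]) (simp add: \<psi>_def)
  also have "\<dots> = (\<integral>\<^sup>+y. 0 \<partial>Leb {i})"
    by (intro nn_integral_cong) (simp add: \<psi>_def)
  also have "\<dots> = 0" by simp
  finally have z: "(\<integral>\<^sup>+x. ennreal (part_dens I p P x * \<psi> (restrict x {i})) \<partial>Leb I) = 0" .
  have m: "(\<lambda>x. ennreal (part_dens I p P x * \<psi> (restrict x {i}))) \<in> borel_measurable (Leb I)"
  proof -
    have "(\<lambda>x. \<psi> (restrict x {i})) \<in> borel_measurable (Leb I)"
      by (rule measurable_compose[OF measurable_restrict_subset[OF iI] \<psi>m])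
    then show ?thesis using Gm[OF P] by measurable
  qed
  show ?thesis
    using z unfolding nn_integral_0_iff_AE[OF m]
  proof (rule AE_mp, intro AE_I2 impI)
    fix x assume "ennreal (part_dens I p P x * \<psi> (restrict x {i})) = 0" "0 < part_dens I p P x"
    then have "\<psi> (restrict x {i}) = 0"
      by (auto simp: \<psi>_def split: if_splits)
    then show "0 < marg I p {i} (restrict x {i})"
      using g0[OF iI, of "restrict x {i}"] by (auto simp: \<psi>_def split: if_splits)
  qed
qed


lemma indm: "indep_dens I p \<in> borel_measurable (Leb I)"
  unfolding indep_dens_def[abs_def]
  by (rule borel_measurable_prod[of I "\<lambda>i x. marg I p {i} (restrict x {i})", simplified]) (rule gr, simp)

lemma KL_formula:
  assumes P: "partition_on I P"
    and fe: "\<And>b. b \<subseteq> I \<Longrightarrow> integrable (Leb b) (\<lambda>y. marg I p b y * ln (marg I p b y))"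
  shows "KL_part I p P = (\<Sum>i\<in>I. ent I p {i}) - (\<Sum>C\<in>P. ent I p C)"
proof -
  let ?G = "part_dens I p P"
  define F where "F x = (\<Sum>C\<in>P. ?G x * ln (marg I p C (restrict x C))) - (\<Sum>i\<in>I. ?G x * ln (marg I p {i} (restrict x {i})))" for x
  have intC: "integrable (Leb I) (\<lambda>x. ?G x * ln (marg I p C (restrict x C))) \<and>
      (\<integral>x. ?G x * ln (marg I p C (restrict x C)) \<partial>Leb I) = - ent I p C" if C: "C \<in> P" for C
  proof -
    have CI: "C \<subseteq> I" using pf(2)[OF P C] .
    have "(\<lambda>y. ln (marg I p C y)) \<in> borel_measurable (Leb C)"
      using gm[OF CI] by measurable
    from BLr[OF P C this] fe[OF CI] show ?thesis by (simp add: ent_def)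
  qed
  have inti: "integrable (Leb I) (\<lambda>x. ?G x * ln (marg I p {i} (restrict x {i}))) \<and>
      (\<integral>x. ?G x * ln (marg I p {i} (restrict x {i})) \<partial>Leb I) = - ent I p {i}" if i: "i \<in> I" for i
  proof -
    obtain C where C: "C \<in> P" "i \<in> C" using pf(5)[OF P] i by auto
    have CI: "C \<subseteq> I" using pf(2)[OF P C(1)] .
    have iI: "{i} \<subseteq> I" using i by auto
    have lm: "(\<lambda>y. ln (marg I p {i} y)) \<in> borel_measurable (Leb {i})"
      using gm[OF iI] by measurable
    have \<phi>m: "(\<lambda>y. ln (marg I p {i} (restrict y {i}))) \<in> borel_measurable (Leb C)"
      using C(2) by (intro measurable_compose[OF measurable_restrict_subset lm]) auto
    note e1 = BLr[OF P C(1) \<phi>m]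
    note e2 = MLr[OF CI \<phi>m]
    note e3 = MLr[OF iI lm]
    have Ci: "C \<inter> {i} = {i}" using C(2) by auto
    show ?thesis
      using e1 e2 e3 fe[OF iI] by (simp add: Ci ent_def)
  qed
  have ae: "AE x in Leb I. ?G x * ln (?G x / indep_dens I p x) = F x"
  proof -
    have "AE x in Leb I. \<forall>i\<in>I. 0 < ?G x \<longrightarrow> 0 < marg I p {i} (restrict x {i})"
      by (rule AE_finite_allI[OF finI]) (rule null[OF P])
    then show ?thesis
    proof (rule AE_mp, intro AE_I2 impI)
      fix x assume H: "\<forall>i\<in>I. 0 < ?G x \<longrightarrow> 0 < marg I p {i} (restrict x {i})"
      show "?G x * ln (?G x / indep_dens I p x) = F x"
      proof (cases "?G x = 0")
        case True
        then show ?thesis by (simp add: F_def)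
      next
        case False
        then have Gp: "0 < ?G x" using G0[OF P, of x] by simp
        have nzC: "marg I p C (restrict x C) \<noteq> 0" if "C \<in> P" for C
          using False that pf(1)[OF P] unfolding part_dens_def by auto
        have nzi: "marg I p {i} (restrict x {i}) \<noteq> 0" if "i \<in> I" for i
          using H Gp that by auto
        have ind: "indep_dens I p x \<noteq> 0"
          unfolding indep_dens_def using nzi finI by auto
        have "ln (?G x / indep_dens I p x) = ln (?G x) - ln (indep_dens I p x)"
          using False ind by (simp add: ln_div)
        also have "ln (?G x) = (\<Sum>C\<in>P. ln (marg I p C (restrict x C)))"
          unfolding part_dens_def by (rule ln_prod[OF pf(1)[OF P] nzC])
        also have "ln (indep_dens I p x) = (\<Sum>i\<in>I. ln (marg I p {i} (restrict x {i})))"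
          unfolding indep_dens_def by (rule ln_prod[OF finI nzi])
        finally have L: "ln (?G x / indep_dens I p x) = (\<Sum>C\<in>P. ln (marg I p C (restrict x C))) - (\<Sum>i\<in>I. ln (marg I p {i} (restrict x {i})))" .
        show ?thesis
          unfolding F_def L by (simp only: sum_distrib_left right_diff_distrib)
      qed
    qed
  qed
  have "KL_part I p P = (\<integral>x. F x \<partial>Leb I)"
    unfolding KL_part_def
  proof (rule integral_cong_AE)
    show "(\<lambda>x. ?G x * ln (?G x / indep_dens I p x)) \<in> borel_measurable (Leb I)"
      using Gm[OF P] indm by measurable
    have "(\<lambda>x. (\<Sum>C\<in>P. ?G x * ln (marg I p C (restrict x C))) - (\<Sum>i\<in>I. ?G x * ln (marg I p {i} (restrict x {i})))) \<in> borel_measurable (Leb I)"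
      using intC inti by (intro borel_measurable_diff borel_measurable_sum) auto
    then show "F \<in> borel_measurable (Leb I)" unfolding F_def[abs_def] .
    show "AE x in Leb I. ?G x * ln (?G x / indep_dens I p x) = F x" by (rule ae)
  qed
  also have "\<dots> = (\<Sum>C\<in>P. (\<integral>x. ?G x * ln (marg I p C (restrict x C)) \<partial>Leb I)) - (\<Sum>i\<in>I. (\<integral>x. ?G x * ln (marg I p {i} (restrict x {i})) \<partial>Leb I))"
  proof -
    have i1: "integrable (Leb I) (\<lambda>x. \<Sum>C\<in>P. ?G x * ln (marg I p C (restrict x C)))"
      by (rule Bochner_Integration.integrable_sum[where f="\<lambda>C x. part_dens I p P x * ln (marg I p C (restrict x C))"]) (use intC in blast)
    have i2: "integrable (Leb I) (\<lambda>x. \<Sum>i\<in>I. ?G x * ln (marg I p {i} (restrict x {i})))"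
      by (rule Bochner_Integration.integrable_sum[where f="\<lambda>i x. part_dens I p P x * ln (marg I p {i} (restrict x {i}))"]) (use inti in blast)
    show ?thesis
      unfolding F_def Bochner_Integration.integral_diff[OF i1 i2]
      using Bochner_Integration.integral_sum[where f="\<lambda>C x. part_dens I p P x * ln (marg I p C (restrict x C))" and I=P and M="Leb I"]
        Bochner_Integration.integral_sum[where f="\<lambda>i x. part_dens I p P x * ln (marg I p {i} (restrict x {i}))" and I=I and M="Leb I"]
        intC inti by simp
  qed
  also have "\<dots> = (\<Sum>C\<in>P. - ent I p C) - (\<Sum>i\<in>I. - ent I p {i})"
    using intC inti by simp
  finally show ?thesis by (simp add: sum_negf)
qed

end

lemma part_remove:
  assumes "partition_on A P" "C \<in> P"
  shows "partition_on (A - C) (P - {C})" "C \<subseteq> A" "C \<noteq> {}"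
proof -
  have d: "disjnt C (\<Union>(P - {C}))"
    using assms partition_onD2[OF assms(1)] by (auto simp: pairwise_def disjnt_def)
  have P: "insert C (P - {C}) = P" using assms(2) by auto
  from partition_on_insert[OF d, of A] assms(1) P
  show "partition_on (A - C) (P - {C})" "C \<subseteq> A" "C \<noteq> {}" by auto
qed

lemma part_add:
  assumes "partition_on (A - B) T" "B \<subseteq> A" "B \<noteq> {}"
  shows "partition_on A (insert B T)" "B \<notin> T"
proof -
  have d: "disjnt B (\<Union>T)" using partition_onD1[OF assms(1)] by (auto simp: disjnt_def)
  from partition_on_insert[OF d, of A] assms show "partition_on A (insert B T)" by auto
  show "B \<notin> T"
  proof
    assume "B \<in> T"
    then have "B \<subseteq> A - B" using partition_onD1[OF assms(1)] by auto
    then show False using assms(3) by auto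
  qed
qed

lemma SW:
  fixes g :: "'a set \<Rightarrow> 'a set set \<Rightarrow> real"
  assumes A: "finite A"
  shows "(\<Sum>P\<in>{P. partition_on A P}. \<Sum>C\<in>P. g C (P - {C}))
       = (\<Sum>B\<in>Pow A - {{}}. \<Sum>T\<in>{T. partition_on (A - B) T}. g B T)"
proof -
  have fP: "finite {P. partition_on A P}" by (rule finitely_many_partition_on[OF A])
  have fe: "\<And>P. P \<in> {P. partition_on A P} \<Longrightarrow> finite P" using finite_elements[OF A] by auto
  have fT: "\<And>B. finite {T. partition_on (A - B) T}" using finitely_many_partition_on A by auto
  have "(\<Sum>P\<in>{P. partition_on A P}. \<Sum>C\<in>P. g C (P - {C}))
      = (\<Sum>(P, C)\<in>Sigma {P. partition_on A P} (\<lambda>P. P). g C (P - {C}))"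
    by (rule sum.Sigma[OF fP]) (use fe in auto)
  also have "\<dots> = (\<Sum>(B, T)\<in>Sigma (Pow A - {{}}) (\<lambda>B. {T. partition_on (A - B) T}). g B T)"
  proof (rule sum.reindex_bij_witness[where i="\<lambda>(B, T). (insert B T, B)" and j="\<lambda>(P, C). (C, P - {C})"])
    fix a assume "a \<in> Sigma {P. partition_on A P} (\<lambda>P. P)"
    then obtain P C where a: "a = (P, C)" "partition_on A P" "C \<in> P" by auto
    show "(case case a of (P, C) \<Rightarrow> (C, P - {C}) of (B, T) \<Rightarrow> (insert B T, B)) = a"
      using a by auto
    show "(case a of (P, C) \<Rightarrow> (C, P - {C})) \<in> Sigma (Pow A - {{}}) (\<lambda>B. {T. partition_on (A - B) T})"
      using a part_remove[OF a(2,3)] by auto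
    show "(case case a of (P, C) \<Rightarrow> (C, P - {C}) of (B, T) \<Rightarrow> g B T) = (case a of (P, C) \<Rightarrow> g C (P - {C}))"
      using a by auto
  next
    fix b assume "b \<in> Sigma (Pow A - {{}}) (\<lambda>B. {T. partition_on (A - B) T})"
    then obtain B T where b: "b = (B, T)" "partition_on (A - B) T" "B \<subseteq> A" "B \<noteq> {}" by auto
    show "(case case b of (B, T) \<Rightarrow> (insert B T, B) of (P, C) \<Rightarrow> (C, P - {C})) = b"
      using b part_add[OF b(2,3,4)] by auto
    show "(case b of (B, T) \<Rightarrow> (insert B T, B)) \<in> Sigma {P. partition_on A P} (\<lambda>P. P)"
      using b part_add[OF b(2,3,4)] by auto
  qed
  also have "\<dots> = (\<Sum>B\<in>Pow A - {{}}. \<Sum>T\<in>{T. partition_on (A - B) T}. g B T)"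
    by (rule sum.Sigma[symmetric]) (use A fT in auto)
  finally show ?thesis .
qed

lemma SWfix:
  fixes f :: "'a set set \<Rightarrow> real"
  assumes A: "finite A" and a: "a \<in> A"
  shows "(\<Sum>P\<in>{P. partition_on A P}. f P)
       = (\<Sum>B\<in>{B. B \<subseteq> A \<and> a \<in> B}. \<Sum>T\<in>{T. partition_on (A - B) T}. f (insert B T))"
proof -
  have "(\<Sum>P\<in>{P. partition_on A P}. f P)
      = (\<Sum>P\<in>{P. partition_on A P}. \<Sum>C\<in>P. (\<lambda>C T. if a \<in> C then f (insert C T) else 0) C (P - {C}))"
  proof (rule sum.cong[OF refl])
    fix P assume P: "P \<in> {P. partition_on A P}"
    then have pP: "partition_on A P" by simp
    obtain C0 where C0: "C0 \<in> P" "a \<in> C0" using partition_onD1[OF pP] a by auto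
    have eq: "a \<in> C \<longleftrightarrow> C = C0" if "C \<in> P" for C
      using partition_onD2[OF pP] C0 that by (auto simp: pairwise_def disjnt_def)
    have "(\<Sum>C\<in>P. (\<lambda>C T. if a \<in> C then f (insert C T) else 0) C (P - {C}))
        = (\<Sum>C\<in>P. if C = C0 then f P else 0)"
    proof (rule sum.cong[OF refl])
      fix C assume "C \<in> P"
      then show "(\<lambda>C T. if a \<in> C then f (insert C T) else 0) C (P - {C}) = (if C = C0 then f P else 0)"
        using eq[of C] by (auto simp: insert_absorb)
    qed
    also have "\<dots> = f P" using C0 finite_elements[OF A pP] by simp
    finally show "f P = (\<Sum>C\<in>P. (\<lambda>C T. if a \<in> C then f (insert C T) else 0) C (P - {C}))" by simp
  qed
  also have "\<dots> = (\<Sum>B\<in>Pow A - {{}}. \<Sum>T\<in>{T. partition_on (A - B) T}. if a \<in> B then f (insert B T) else 0)"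
    by (rule SW[OF A])
  also have "\<dots> = (\<Sum>B\<in>Pow A - {{}}. if a \<in> B then (\<Sum>T\<in>{T. partition_on (A - B) T}. f (insert B T)) else 0)"
    by (rule sum.cong[OF refl]) auto
  also have "\<dots> = (\<Sum>B\<in>{B \<in> Pow A - {{}}. a \<in> B}. \<Sum>T\<in>{T. partition_on (A - B) T}. f (insert B T))"
    by (rule sum.inter_filter[symmetric]) (use A in auto)
  also have "{B \<in> Pow A - {{}}. a \<in> B} = {B. B \<subseteq> A \<and> a \<in> B}" by auto
  finally show ?thesis .
qed


lemma Fsum:
  assumes "finite A"
  shows "(\<Sum>S\<in>{S. partition_on A S}. fact (card S) * (-1::real) ^ card S) = (-1) ^ card A"
  using assms
proof (induction A rule: finite_induct)
  case empty
  then show ?case by (simp add: partition_on_empty)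
next
  case (insert a A)
  let ?u = "\<lambda>k::nat. fact (k + 1) * (-1::real) ^ (k + 1)"
  let ?F = "\<lambda>X. (\<Sum>S\<in>{S. partition_on X S}. fact (card S) * (-1::real) ^ card S)"
  have fA: "finite (insert a A)" using insert by simp
  have "?F (insert a A) = (\<Sum>B\<in>{B. B \<subseteq> insert a A \<and> a \<in> B}. \<Sum>T\<in>{T. partition_on (insert a A - B) T}. fact (card (insert B T)) * (-1::real) ^ card (insert B T))"
    by (rule SWfix[OF fA]) simp
  also have "\<dots> = (\<Sum>B\<in>{B. B \<subseteq> insert a A \<and> a \<in> B}. \<Sum>T\<in>{T. partition_on (insert a A - B) T}. ?u (card T))"
  proof (intro sum.cong refl)
    fix B T assume B: "B \<in> {B. B \<subseteq> insert a A \<and> a \<in> B}" and T: "T \<in> {T. partition_on (insert a A - B) T}"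
    have "B \<notin> T" using part_add(2)[of "insert a A" B T] B T by auto
    moreover have "finite T" using T finite_elements[of "insert a A - B" T] fA by auto
    ultimately show "fact (card (insert B T)) * (-1::real) ^ card (insert B T) = ?u (card T)" by simp
  qed
  also have "\<dots> = (\<Sum>B'\<in>Pow A. \<Sum>T\<in>{T. partition_on (A - B') T}. ?u (card T))"
  proof -
    have inj: "inj_on (insert a) (Pow A)" using insert.hyps(2) by (auto simp: inj_on_def)
    have im: "insert a ` Pow A = {B. B \<subseteq> insert a A \<and> a \<in> B}"
    proof
      show "{B. B \<subseteq> insert a A \<and> a \<in> B} \<subseteq> insert a ` Pow A"
      proof
        fix B assume "B \<in> {B. B \<subseteq> insert a A \<and> a \<in> B}"
        then have "B = insert a (B - {a})" "B - {a} \<in> Pow A" by auto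
        then show "B \<in> insert a ` Pow A" by blast
      qed
    qed auto
    have d: "insert a A - insert a B' = A - B'" if "B' \<in> Pow A" for B' using insert.hyps(2) that by auto
    show ?thesis unfolding im[symmetric] sum.reindex[OF inj] using d by simp
  qed
  also have "\<dots> = (\<Sum>T\<in>{T. partition_on A T}. ?u (card T)) + (\<Sum>B'\<in>Pow A - {{}}. \<Sum>T\<in>{T. partition_on (A - B') T}. ?u (card T))"
    using sum.remove[of "Pow A" "{}" "\<lambda>B'. \<Sum>T\<in>{T. partition_on (A - B') T}. ?u (card T)"] insert.hyps(1) by simp
  also have "(\<Sum>B'\<in>Pow A - {{}}. \<Sum>T\<in>{T. partition_on (A - B') T}. ?u (card T))
      = (\<Sum>S\<in>{S. partition_on A S}. \<Sum>C\<in>S. ?u (card (S - {C})))"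
    by (rule SW[OF insert.hyps(1), symmetric])
  also have "\<dots> = (\<Sum>S\<in>{S. partition_on A S}. real (card S) * (fact (card S) * (-1::real) ^ card S))"
  proof (rule sum.cong[OF refl])
    fix S assume "S \<in> {S. partition_on A S}"
    then have fS: "finite S" using finite_elements[OF insert.hyps(1)] by auto
    have "(\<Sum>C\<in>S. ?u (card (S - {C}))) = (\<Sum>C\<in>S. ?u (card S - 1))"
      using fS by (intro sum.cong refl) simp
    also have "\<dots> = real (card S) * (fact (card S) * (-1::real) ^ card S)"
      by (cases "card S") auto
    finally show "(\<Sum>C\<in>S. ?u (card (S - {C}))) = real (card S) * (fact (card S) * (-1::real) ^ card S)" .
  qed
  also have "(\<Sum>T\<in>{T. partition_on A T}. ?u (card T)) + (\<Sum>S\<in>{S. partition_on A S}. real (card S) * (fact (card S) * (-1::real) ^ card S))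
      = (\<Sum>S\<in>{S. partition_on A S}. ?u (card S) + real (card S) * (fact (card S) * (-1::real) ^ card S))"
    by (rule sum.distrib[symmetric])
  also have "\<dots> = (\<Sum>S\<in>{S. partition_on A S}. - (fact (card S) * (-1::real) ^ card S))"
    by (intro sum.cong refl) (simp add: algebra_simps)
  also have "\<dots> = - ?F A" by (simp add: sum_negf)
  also have "\<dots> = (-1) ^ card (insert a A)" using insert by simp
  finally show ?case .
qed

lemma CL:
  fixes h :: "'a set \<Rightarrow> real"
  assumes I: "finite I"
  shows "(\<Sum>P\<in>{P. partition_on I P}. fact (card P - 1) * (-1) ^ (card P - 1) * (\<Sum>C\<in>P. h C))
       = (\<Sum>B\<in>Pow I - {{}}. (-1) ^ (card I - card B) * h B)"
proof -
  have "(\<Sum>P\<in>{P. partition_on I P}. fact (card P - 1) * (-1) ^ (card P - 1) * (\<Sum>C\<in>P. h C))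
      = (\<Sum>P\<in>{P. partition_on I P}. \<Sum>C\<in>P. (\<lambda>C T. fact (card T) * (-1) ^ card T * h C) C (P - {C}))"
  proof (rule sum.cong[OF refl])
    fix P assume "P \<in> {P. partition_on I P}"
    then have fP: "finite P" using finite_elements[OF I] by auto
    have "(\<Sum>C\<in>P. (\<lambda>C T. fact (card T) * (-1) ^ card T * h C) C (P - {C}))
        = (\<Sum>C\<in>P. fact (card P - 1) * (-1) ^ (card P - 1) * h C)"
      using fP by (intro sum.cong refl) simp
    then show "fact (card P - 1) * (-1) ^ (card P - 1) * (\<Sum>C\<in>P. h C)
        = (\<Sum>C\<in>P. (\<lambda>C T. fact (card T) * (-1) ^ card T * h C) C (P - {C}))"
      by (simp add: sum_distrib_left)
  qed
  also have "\<dots> = (\<Sum>B\<in>Pow I - {{}}. \<Sum>T\<in>{T. partition_on (I - B) T}. fact (card T) * (-1) ^ card T * h B)"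
    by (rule SW[OF I])
  also have "\<dots> = (\<Sum>B\<in>Pow I - {{}}. (-1) ^ (card I - card B) * h B)"
  proof (rule sum.cong[OF refl])
    fix B assume B: "B \<in> Pow I - {{}}"
    have "(\<Sum>T\<in>{T. partition_on (I - B) T}. fact (card T) * (-1) ^ card T * h B)
        = (\<Sum>T\<in>{T. partition_on (I - B) T}. fact (card T) * (-1) ^ card T) * h B"
      by (simp add: sum_distrib_right)
    also have "\<dots> = (-1) ^ card (I - B) * h B" using Fsum[of "I - B"] I by simp
    also have "card (I - B) = card I - card B" using B I by (meson DiffD1 PowD card_Diff_subset finite_subset)
    finally show "(\<Sum>T\<in>{T. partition_on (I - B) T}. fact (card T) * (-1) ^ card T * h B) = (-1) ^ (card I - card B) * h B" .
  qed
  finally show ?thesis .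
qed

lemma sign_diff: "b \<le> n \<Longrightarrow> (-1::real) ^ (n - b) = (-1) ^ n * (-1) ^ b"
proof -
  assume "b \<le> n"
  then obtain c where n: "n = b + c" using le_Suc_ex by blast
  have "((-1::real) ^ b) * ((-1) ^ b) = 1" by (simp flip: power_add add: mult_2[symmetric] power_mult)
  then show ?thesis unfolding n by (simp add: power_add mult_ac)
qed

lemma ALT:
  assumes I: "finite I" and i: "i \<in> I" and j: "j \<in> I" "i \<noteq> j"
  shows "(\<Sum>B\<in>{B \<in> Pow I. i \<in> B}. (-1::real) ^ card B) = 0"
proof -
  let ?S = "{B \<in> Pow I. i \<in> B}"
  let ?t = "\<lambda>B. if j \<in> B then B - {j} else insert j B"
  have fB: "finite B" if "B \<in> ?S" for B using that I finite_subset by auto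
  have "(\<Sum>B\<in>?S. - ((-1::real) ^ card B)) = (\<Sum>B\<in>?S. (-1::real) ^ card B)"
  proof (rule sum.reindex_bij_witness[where i="?t" and j="?t"])
    fix B assume B: "B \<in> ?S"
    show "?t (?t B) = B" using B by auto
    show "?t B \<in> ?S" using B j by auto
    show "(-1::real) ^ card (?t B) = - ((-1) ^ card B)"
    proof (cases "j \<in> B")
      case True
      have c: "card B = Suc (card (B - {j}))" by (rule card_Suc_Diff1[OF fB[OF B] True, symmetric])
      have t: "?t B = B - {j}" using True by simp
      show ?thesis unfolding t by (simp only: c power_Suc)
    next
      case False
      then show ?thesis using fB[OF B] by simp
    qed
  qed (use j in auto)
  then show ?thesis by (simp add: sum_negf)
qed

context
  fixes I :: "'a set" and h :: "'a set \<Rightarrow> real"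
  assumes finI: "finite I" and two: "2 \<le> card I" and h0: "h {} = 0"
begin

definition "hs B = (\<Sum>i\<in>B. h {i})"
definition "kk B = hs B - h B"

lemma kk_small: "finite C \<Longrightarrow> card C < 2 \<Longrightarrow> kk C = 0"
proof -
  assume f: "finite C" and c: "card C < 2"
  show "kk C = 0"
  proof (cases "C = {}")
    case True
    then show ?thesis by (simp add: kk_def hs_def h0)
  next
    case False
    then have "card C = 1" using f c card_gt_0_iff[of C] by linarith
    then obtain x where "C = {x}" by (auto simp: card_1_singleton_iff)
    then show ?thesis by (simp add: kk_def hs_def)
  qed
qed

lemma hs_part: "partition_on I P \<Longrightarrow> hs I - (\<Sum>C\<in>P. h C) = (\<Sum>C\<in>P. kk C)"
proof -
  assume P: "partition_on I P"
  have fP: "finite P" using finite_elements[OF finI P] .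
  have "hs I = (\<Sum>C\<in>P. hs C)"
    unfolding hs_def partition_onD1[OF P]
    using sum.Union_disjoint[of P "\<lambda>i. h {i}"] P finI partition_onD1[OF P] partition_onD2[OF P]
    by (auto simp: pairwise_def disjnt_def intro: finite_subset)
  then show ?thesis by (simp add: kk_def sum_subtractf)
qed

definition "V = (\<Sum>B\<in>Pow I. (-1) ^ (card I - card B) * kk B)"

lemma V_alt: "V = (\<Sum>B\<in>Pow I - {{}}. (-1) ^ (card I - card B) * kk B)"
  unfolding V_def using sum.remove[of "Pow I" "{}" "\<lambda>B. (-1) ^ (card I - card B) * kk B"] finI
  by (simp add: kk_small)

lemma hs_zero: "(\<Sum>B\<in>Pow I. (-1) ^ (card I - card B) * hs B) = 0"
proof -
  have "(\<Sum>B\<in>Pow I. (-1) ^ (card I - card B) * hs B)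
      = (\<Sum>B\<in>Pow I. \<Sum>i\<in>I. if i \<in> B then (-1) ^ card I * ((-1) ^ card B * h {i}) else 0)"
  proof (rule sum.cong[OF refl])
    fix B assume B: "B \<in> Pow I"
    then have le: "card B \<le> card I" using finI by (simp add: card_mono)
    have "hs B = (\<Sum>i\<in>I. if i \<in> B then h {i} else 0)"
      unfolding hs_def using B finI by (simp add: sum.If_cases Int_absorb1)
    then show "(-1) ^ (card I - card B) * hs B = (\<Sum>i\<in>I. if i \<in> B then (-1) ^ card I * ((-1) ^ card B * h {i}) else 0)"
      by (simp add: sign_diff[OF le] sum_distrib_left if_distrib mult_ac cong: if_cong)
  qed
  also have "\<dots> = (\<Sum>i\<in>I. \<Sum>B\<in>Pow I. if i \<in> B then (-1) ^ card I * ((-1) ^ card B * h {i}) else 0)"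
    by (rule sum.swap)
  also have "\<dots> = (\<Sum>i\<in>I. (-1) ^ card I * h {i} * (\<Sum>B\<in>{B \<in> Pow I. i \<in> B}. (-1) ^ card B))"
  proof (rule sum.cong[OF refl])
    fix i assume "i \<in> I"
    have "(\<Sum>B\<in>Pow I. if i \<in> B then (-1) ^ card I * ((-1) ^ card B * h {i}) else 0)
        = (\<Sum>B\<in>{B \<in> Pow I. i \<in> B}. (-1) ^ card I * ((-1) ^ card B * h {i}))"
      by (rule sum.inter_filter[symmetric]) (use finI in simp)
    then show "(\<Sum>B\<in>Pow I. if i \<in> B then (-1) ^ card I * ((-1) ^ card B * h {i}) else 0)
        = (-1) ^ card I * h {i} * (\<Sum>B\<in>{B \<in> Pow I. i \<in> B}. (-1) ^ card B)"
      by (simp add: sum_distrib_left sum_distrib_right mult_ac)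
  qed
  also have "\<dots> = 0"
  proof (rule sum.neutral, rule ballI)
    fix i assume i: "i \<in> I"
    obtain j where j: "j \<in> I" "i \<noteq> j"
    proof -
      have "I - {i} \<noteq> {}"
      proof
        assume "I - {i} = {}"
        then have "I \<subseteq> {i}" by auto
        then have "card I \<le> card {i}" by (rule card_mono[rotated]) simp
        then have "card I \<le> 1" by simp
        then show False using two by simp
      qed
      then show ?thesis using that by blast
    qed
    show "(-1) ^ card I * h {i} * (\<Sum>B\<in>{B \<in> Pow I. i \<in> B}. (-1::real) ^ card B) = 0"
      using ALT[OF finI i j] by simp
  qed
  finally show ?thesis .
qed

lemma II_val: "- (\<Sum>T\<in>Pow I. (-1) ^ (card I - card T) * h T) = V"
proof -
  have "V = (\<Sum>B\<in>Pow I. (-1) ^ (card I - card B) * hs B) - (\<Sum>B\<in>Pow I. (-1) ^ (card I - card B) * h B)"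
    unfolding V_def kk_def by (simp add: right_diff_distrib sum_subtractf)
  then show ?thesis using hs_zero by simp
qed

lemma SI_val: "(\<Sum>P\<in>{P. partition_on I P}. fact (card P - 1) * (-1) ^ (card P - 1) * (hs I - (\<Sum>C\<in>P. h C))) = V"
proof -
  have "(\<Sum>P\<in>{P. partition_on I P}. fact (card P - 1) * (-1) ^ (card P - 1) * (hs I - (\<Sum>C\<in>P. h C)))
     = (\<Sum>P\<in>{P. partition_on I P}. fact (card P - 1) * (-1) ^ (card P - 1) * (\<Sum>C\<in>P. kk C))"
    by (intro sum.cong refl) (simp add: hs_part)
  also have "\<dots> = (\<Sum>B\<in>Pow I - {{}}. (-1) ^ (card I - card B) * kk B)"
    by (rule CL[OF finI])
  finally show ?thesis by (simp add: V_alt)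
qed


lemma sing_part:
  assumes T: "partition_on X T" and X: "finite X" and e: "{B' \<in> T. 2 \<le> card B'} = {}"
  shows "T = (\<lambda>x. {x}) ` X"
proof
  show "T \<subseteq> (\<lambda>x. {x}) ` X"
  proof
    fix C assume C: "C \<in> T"
    have ne: "C \<noteq> {}" using partition_onD3[OF T] C by auto
    have sub: "C \<subseteq> X" using partition_onD1[OF T] C by auto
    then have f: "finite C" using X finite_subset by auto
    have "card C < 2" using e C by auto
    then have "card C = 1" using ne f card_gt_0_iff[of C] by linarith
    then obtain x where "C = {x}" by (auto simp: card_1_singleton_iff)
    then show "C \<in> (\<lambda>x. {x}) ` X" using sub by auto
  qed
next
  show "(\<lambda>x. {x}) ` X \<subseteq> T"
  proof
    fix D assume "D \<in> (\<lambda>x. {x}) ` X"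
    then obtain x where x: "x \<in> X" "D = {x}" by auto
    then obtain C where C: "C \<in> T" "x \<in> C" using partition_onD1[OF T] by auto
    have ne: "C \<noteq> {}" using C by auto
    have sub: "C \<subseteq> X" using partition_onD1[OF T] C by auto
    then have f: "finite C" using X finite_subset by auto
    have "card C < 2" using e C by auto
    then have "card C = 1" using ne f card_gt_0_iff[of C] by linarith
    then obtain y where "C = {y}" by (auto simp: card_1_singleton_iff)
    then show "D \<in> T" using C x by auto
  qed
qed

lemma LI_val: "(\<Sum>P\<in>{P. partition_on I P \<and> card {B\<in>P. 2 \<le> card B} \<le> 1}. (-1) ^ (card P - 1) * (hs I - (\<Sum>C\<in>P. h C))) = V"
proof -
  define k' where "k' C = (if 2 \<le> card C then kk C else 0)" for C :: "'a set"
  define G where "G C T = (if card {B' \<in> insert C T. 2 \<le> card B'} \<le> 1 then (-1) ^ card T * k' C else 0)" for C T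
  have fPs: "finite {P. partition_on I P}" by (rule finitely_many_partition_on[OF finI])
  have "(\<Sum>P\<in>{P. partition_on I P \<and> card {B\<in>P. 2 \<le> card B} \<le> 1}. (-1) ^ (card P - 1) * (hs I - (\<Sum>C\<in>P. h C)))
      = (\<Sum>P\<in>{P \<in> {P. partition_on I P}. card {B\<in>P. 2 \<le> card B} \<le> 1}. (-1) ^ (card P - 1) * (hs I - (\<Sum>C\<in>P. h C)))"
    by (rule sum.cong) auto
  also have "\<dots> = (\<Sum>P\<in>{P. partition_on I P}. if card {B\<in>P. 2 \<le> card B} \<le> 1 then (-1) ^ (card P - 1) * (hs I - (\<Sum>C\<in>P. h C)) else 0)"
    by (rule sum.inter_filter[OF fPs])
  also have "\<dots> = (\<Sum>P\<in>{P. partition_on I P}. \<Sum>C\<in>P. G C (P - {C}))"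
  proof (rule sum.cong[OF refl])
    fix P assume "P \<in> {P. partition_on I P}"
    then have P: "partition_on I P" by simp
    have fP: "finite P" using finite_elements[OF finI P] .
    have kk': "k' C = kk C" if "C \<in> P" for C
    proof -
      have "C \<subseteq> I" using partition_onD1[OF P] that by auto
      then have "finite C" using finI finite_subset by auto
      then show ?thesis unfolding k'_def using kk_small by auto
    qed
    have "(\<Sum>C\<in>P. G C (P - {C})) = (\<Sum>C\<in>P. if card {B\<in>P. 2 \<le> card B} \<le> 1 then (-1) ^ (card P - 1) * kk C else 0)"
    proof (rule sum.cong[OF refl])
      fix C assume C: "C \<in> P"
      have "insert C (P - {C}) = P" using C by auto
      moreover have "card (P - {C}) = card P - 1" using C fP by simp
      ultimately show "G C (P - {C}) = (if card {B\<in>P. 2 \<le> card B} \<le> 1 then (-1) ^ (card P - 1) * kk C else 0)"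
        unfolding G_def using kk'[OF C] by simp
    qed
    also have "\<dots> = (if card {B\<in>P. 2 \<le> card B} \<le> 1 then (-1) ^ (card P - 1) * (\<Sum>C\<in>P. kk C) else 0)"
      by (simp add: sum_distrib_left)
    also have "\<dots> = (if card {B\<in>P. 2 \<le> card B} \<le> 1 then (-1) ^ (card P - 1) * (hs I - (\<Sum>C\<in>P. h C)) else 0)"
      using hs_part[OF P] by simp
    finally show "(if card {B\<in>P. 2 \<le> card B} \<le> 1 then (-1) ^ (card P - 1) * (hs I - (\<Sum>C\<in>P. h C)) else 0) = (\<Sum>C\<in>P. G C (P - {C}))"
      by simp
  qed
  also have "\<dots> = (\<Sum>B\<in>Pow I - {{}}. \<Sum>T\<in>{T. partition_on (I - B) T}. G B T)"
    by (rule SW[OF finI])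
  also have "\<dots> = (\<Sum>B\<in>Pow I - {{}}. (-1) ^ (card I - card B) * kk B)"
  proof (rule sum.cong[OF refl])
    fix B assume B: "B \<in> Pow I - {{}}"
    have fB: "finite B" using B finI finite_subset by auto
    show "(\<Sum>T\<in>{T. partition_on (I - B) T}. G B T) = (-1) ^ (card I - card B) * kk B"
    proof (cases "2 \<le> card B")
      case False
      then have k0: "k' B = 0" unfolding k'_def by simp
      have "G B T = 0" for T unfolding G_def k0 by simp
      then show ?thesis using kk_small[OF fB] False by simp
    next
      case True
      let ?S0 = "(\<lambda>x. {x}) ` (I - B)"
      have GT: "G B T = (if T = ?S0 then (-1) ^ card T * kk B else 0)" if T: "T \<in> {T. partition_on (I - B) T}" for T
      proof -
        have pT: "partition_on (I - B) T" using T by simp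
        have nB: "B \<notin> T" using part_add(2)[OF pT] B by auto
        have fT: "finite T" using finite_elements[OF _ pT] finI by auto
        have eq: "{B' \<in> insert B T. 2 \<le> card B'} = insert B {B' \<in> T. 2 \<le> card B'}" using True by auto
        have "card {B' \<in> insert B T. 2 \<le> card B'} = Suc (card {B' \<in> T. 2 \<le> card B'})"
          unfolding eq using nB fT by simp
        then have c: "card {B' \<in> insert B T. 2 \<le> card B'} \<le> 1 \<longleftrightarrow> {B' \<in> T. 2 \<le> card B'} = {}"
          using fT by auto
        have "{B' \<in> T. 2 \<le> card B'} = {} \<longleftrightarrow> T = ?S0"
        proof
          assume "{B' \<in> T. 2 \<le> card B'} = {}"
          then show "T = ?S0" using sing_part[OF pT] finI by auto
        next
          assume "T = ?S0"
          then show "{B' \<in> T. 2 \<le> card B'} = {}" by auto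
        qed
        then show ?thesis unfolding G_def k'_def using c True by simp
      qed
      have "(\<Sum>T\<in>{T. partition_on (I - B) T}. G B T) = (\<Sum>T\<in>{T. partition_on (I - B) T}. if T = ?S0 then (-1) ^ card T * kk B else 0)"
        using GT by (rule sum.cong[OF refl])
      also have "\<dots> = (-1) ^ card ?S0 * kk B"
        using finitely_many_partition_on[of "I - B"] finI partition_on_singletons[of "I - B"]
        by (simp add: sum.delta')
      also have "card ?S0 = card (I - B)" by (rule card_image) (simp add: inj_on_def)
      also have "card (I - B) = card I - card B" using B fB by (simp add: card_Diff_subset)
      finally show ?thesis .
    qed
  qed
  also have "\<dots> = V" by (simp add: V_alt)
  finally show ?thesis .
qed

end

lemma ent_empty:
  assumes total: "(\<integral>x. p x \<partial>Leb I) = 1"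
  shows "ent I p {} = 0"
proof -
  have m: "marg I p {} y = 1" for y
  proof -
    have "(\<integral>z. p (merge {} (I - {}) (y, z)) \<partial>Leb (I - {})) = (\<integral>z. p z \<partial>Leb I)"
    proof (rule Bochner_Integration.integral_cong)
      fix z assume z: "z \<in> space (Leb I)"
      then have "merge {} (I - {}) (y, z) = z"
        by (auto simp: merge_def space_PiM PiE_def extensional_def fun_eq_iff)
      then show "p (merge {} (I - {}) (y, z)) = p z" by simp
    qed simp
    then show ?thesis using total by (simp add: marg_def)
  qed
  show ?thesis by (simp add: ent_def m)
qed

theorem proposition1:
  fixes d :: nat and p :: "(nat \<Rightarrow> real) \<Rightarrow> real"
  assumes "d \<ge> 2"
    and meas: "p \<in> borel_measurable (Leb {..<d})"
    and nonneg: "\<And>x. x \<in> space (Leb {..<d}) \<Longrightarrow> 0 \<le> p x"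
    and integ: "integrable (Leb {..<d}) p"
    and total: "(\<integral>x. p x \<partial>Leb {..<d}) = 1"
    and fin_ent: "\<And>b. b \<subseteq> {..<d} \<Longrightarrow>
       integrable (Leb b) (\<lambda>y. marg {..<d} p b y * ln (marg {..<d} p b y))"
    and fin_KL: "\<And>P. partition_on {..<d} P \<Longrightarrow>
       integrable (Leb {..<d})
         (\<lambda>x. part_dens {..<d} p P x * ln (part_dens {..<d} p P x / indep_dens {..<d} p x))"
  shows "II d p = LI d p \<and> LI d p = SI d p"
proof -
  let ?I = "{..<d}"
  let ?h = "ent ?I p"
  have finI: "finite ?I" by simp
  have two: "2 \<le> card ?I" using assms(1) by simp
  have h0: "?h {} = 0" by (rule ent_empty[OF total])
  have KL: "KL_part ?I p P = hs ?h ?I - (\<Sum>C\<in>P. ?h C)" if P: "partition_on ?I P" for P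
    using KL_formula[OF finI meas nonneg integ total P fin_ent] by (simp add: hs_def[of "{..<d}" "ent {..<d} p", OF finI two h0])
  have "II d p = - (\<Sum>T\<in>Pow ?I. (-1) ^ (card ?I - card T) * ?h T)"
    unfolding II_def by simp
  also have "\<dots> = V ?I ?h" by (rule II_val[of "{..<d}" "ent {..<d} p", OF finI two h0])
  finally have e1: "II d p = V ?I ?h" .
  have "LI d p = (\<Sum>P\<in>{P. partition_on ?I P \<and> card {B\<in>P. 2 \<le> card B} \<le> 1}. (-1) ^ (card P - 1) * (hs ?h ?I - (\<Sum>C\<in>P. ?h C)))"
    unfolding LI_def by (rule sum.cong) (auto simp: KL)
  also have "\<dots> = V ?I ?h" by (rule LI_val[of "{..<d}" "ent {..<d} p", OF finI two h0])
  finally have e2: "LI d p = V ?I ?h" .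
  have "SI d p = (\<Sum>P\<in>{P. partition_on ?I P}. fact (card P - 1) * (-1) ^ (card P - 1) * (hs ?h ?I - (\<Sum>C\<in>P. ?h C)))"
    unfolding SI_def by (rule sum.cong) (auto simp: KL)
  also have "\<dots> = V ?I ?h" by (rule SI_val[of "{..<d}" "ent {..<d} p", OF finI two h0])
  finally have e3: "SI d p = V ?I ?h" .
  show ?thesis using e1 e2 e3 by simp
qed

end
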